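(* Let $\gamma\le0\le\beta\le\alpha$ be real with $\alpha+\beta+\gamma=0$, and let $t,\tau\in\mathbb R$ with $X=t+\tau\ge Y=t-\tau$. Let $$G_\tau(s)=\frac{\pi^{-3s}\prod_{\pm}\Gamma\big(\tfrac{s\pm i\tau-i\alpha}{2}\big)\Gamma\big(\tfrac{s\pm i\tau-i\beta}{2}\big)\Gamma\big(\tfrac{s\pm i\tau-i\gamma}{2}\big)}{\pi^{-\frac32+i\alpha-i\gamma}\Gamma\big(\tfrac{1+i\gamma-i\beta}{2}\big)\Gamma\big(\tfrac{1+i\beta-i\alpha}{2}\big)\Gamma\big(\tfrac{1+i\gamma-i\alpha}{2}\big)}.$$ (i) If $X_0\ge0$ and $X\notin[\beta-X_0,\alpha+X_0]$, then $\cosh(\pi\tau)|G_\tau(\frac12+it)|^2\ll\exp(-\pi X_0)$. (ii) If $Y_0\ge0$ and $Y\notin[\gamma-Y_0,\beta+Y_0]$, then $\cosh(\pi\tau)|G_\tau(\frac12+it)|^2\ll\exp(-\pi Y_0)$. (iii) If $\beta-X_0\le X\le\alpha+X_0$ and $\gamma-Y_0\le Y\le\beta+Y_0$, then $\cosh(\pi\tau)|G_\tau(\frac12+it)|^2\ll q_F(t,\tau)^{-1/2}$, where $q_F(t,\tau)=q_F(X)q_F(Y)$ and $q_F(Z)=(1+|Z-\alpha|)(1+|Z-\beta|)(1+|Z-\gamma|)$. All implied constants are absolute. *)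

theory Defs
  imports "HOL-Analysis.Analysis"
begin

definition Gamma_pm :: "real \<Rightarrow> real \<Rightarrow> complex \<Rightarrow> complex" where
  "Gamma_pm \<tau> \<mu> s = Gamma ((s + \<i> * of_real \<tau> - \<i> * of_real \<mu>) / 2) *
                       Gamma ((s - \<i> * of_real \<tau> - \<i> * of_real \<mu>) / 2)"

definition G_tau :: "real \<Rightarrow> real \<Rightarrow> real \<Rightarrow> real \<Rightarrow> complex \<Rightarrow> complex" where
  "G_tau \<alpha> \<beta> \<gamma> \<tau> s =
     ((complex_of_real pi) powr (-3 * s) *
        Gamma_pm \<tau> \<alpha> s * Gamma_pm \<tau> \<beta> s * Gamma_pm \<tau> \<gamma> s)
   / ((complex_of_real pi) powr (- 3 / 2 + \<i> * of_real \<alpha> - \<i> * of_real \<gamma>) *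
        Gamma ((1 + \<i> * of_real \<gamma> - \<i> * of_real \<beta>) / 2) *
        Gamma ((1 + \<i> * of_real \<beta> - \<i> * of_real \<alpha>) / 2) *
        Gamma ((1 + \<i> * of_real \<gamma> - \<i> * of_real \<alpha>) / 2))"

definition qF1 :: "real \<Rightarrow> real \<Rightarrow> real \<Rightarrow> real \<Rightarrow> real" where
  "qF1 \<alpha> \<beta> \<gamma> Z = (1 + \<bar>Z - \<alpha>\<bar>) * (1 + \<bar>Z - \<beta>\<bar>) * (1 + \<bar>Z - \<gamma>\<bar>)"

end

theory Submission
  imports Defs
begin

lemma poly_ineq:
  fixes k u :: real assumes "k \<ge> 1" "u \<ge> 0"
  shows "((k+3/4)^2+u)^2 * (k^2+u) * (k*(k+2)) \<le> ((k+1/4)^2+u)^2 * ((k+1)^2+u) * (k+1)^2"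
proof -
  define m where "m = k - 1"
  have m: "m \<ge> 0" "k = m + 1" using assms by (auto simp: m_def)
  have eq: "((k+1/4)^2+u)^2 * ((k+1)^2+u) * (k+1)^2 - ((k+3/4)^2+u)^2 * (k^2+u) * (k*(k+2))
     = 2797/256 + 3393/256*u + 57/8*u^2 + u^3 + 5763/128*m + 591/16*m*u + 9*m*u^2
       + 4899/64*m^2 + 615/16*m^2*u + 3*m^2*u^2 + 8801/128*m^3 + 141/8*m^3*u
       + 551/16*m^4 + 3*m^4*u + 73/8*m^5 + m^6"
    unfolding m(2) by (simp add: eval_nat_numeral field_simps)
  have "0 \<le> 2797/256 + 3393/256*u + 57/8*u^2 + u^3 + 5763/128*m + 591/16*m*u + 9*m*u^2
       + 4899/64*m^2 + 615/16*m^2*u + 3*m^2*u^2 + 8801/128*m^3 + 141/8*m^3*u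
       + 551/16*m^4 + 3*m^4*u + 73/8*m^5 + (m^6::real)"
    using m(1) assms(2) by (intro add_nonneg_nonneg mult_nonneg_nonneg zero_le_power) auto
  with eq show ?thesis by linarith
qed

lemma prod_bound:
  fixes u :: real assumes u: "u \<ge> 0"
  shows "(\<Prod>k<n+1. ((real k+3/4)^2+u))^2 * (1+u) * (real n+2)
     \<le> 162 * (real n+1) * ((real n+1)^2+u) * (\<Prod>k<n+1. ((real k+1/4)^2+u))^2"
proof (induction n)
  case 0
  have "9/16+u \<le> 9*(1/16+u)" "0 \<le> 9/16+u" using u by auto
  hence "(9/16+u)^2 \<le> (9*(1/16+u))^2" by (intro power_mono) auto
  also have "\<dots> = 81*(1/16+u)^2" by (simp only: power_mult_distrib) simp
  finally have F: "(9/16+u)^2 \<le> 81*(1/16+u)^2" .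
  have H: "(9/16+u)^2 * (1+u) * 2 \<le> 162 * (1+u) * (1/16+u)^2"
    using mult_right_mono[OF F, of "2*(1+u)"] u by (simp add: algebra_simps)
  have e1: "(\<Prod>k<0+1. ((real k+3/4)^2+u)) = 9/16+u" and e2: "(\<Prod>k<0+1. ((real k+1/4)^2+u)) = 1/16+u"
    by (simp_all add: power2_eq_square)
  show ?case unfolding e1 e2 using H by simp
next
  case (Suc n)
  define N where "N = (\<Prod>k<n+1. ((real k+3/4)^2+u))"
  define D where "D = (\<Prod>k<n+1. ((real k+1/4)^2+u))"
  define a where "a = (real (n+1)+3/4)^2+u"
  define b where "b = (real (n+1)+1/4)^2+u"
  have NS: "(\<Prod>k<Suc n+1. ((real k+3/4)^2+u)) = N * a" unfolding N_def a_def by simp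
  have DS: "(\<Prod>k<Suc n+1. ((real k+1/4)^2+u)) = D * b" unfolding D_def b_def by simp
  have IH: "N^2 * (1+u) * (real n+2) \<le> 162 * (real n+1) * ((real n+1)^2+u) * D^2"
    using Suc.IH unfolding N_def D_def .
  have P: "a^2 * ((real n+1)^2+u) * ((real n+1)*(real n+3)) \<le> b^2 * ((real n+2)^2+u) * (real n+2)^2"
    using poly_ineq[of "real n + 1" u] u unfolding a_def b_def by (simp add: algebra_simps)
  have pos1: "0 \<le> a^2 * (real n+3) * ((real n+1))" using u by simp
  have pos2: "0 \<le> 162 * (real n+1) * D^2" by simp
  have "(N^2 * (1+u) * (real n+2)) * (a^2 * (real n+3) * ((real n+1)) * ((real n+1)^2+u))
      \<le> (162 * (real n+1) * ((real n+1)^2+u) * D^2) * (a^2 * (real n+3) * ((real n+1)) * ((real n+1)^2+u))"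
    using IH u by (intro mult_right_mono) auto
  also have "\<dots> = (162 * (real n+1) * D^2) * (a^2 * ((real n+1)^2+u) * ((real n+1)*(real n+3))) * ((real n+1)^2+u)"
    by (simp add: algebra_simps)
  also have "\<dots> \<le> (162 * (real n+1) * D^2) * (b^2 * ((real n+2)^2+u) * (real n+2)^2) * ((real n+1)^2+u)"
    using P u by (intro mult_right_mono mult_left_mono) auto
  finally have *: "((N*a)^2 * (1+u) * (real n+3)) * ((real n+2) * (real n+1) * ((real n+1)^2+u))
      \<le> (162 * (real n+2) * ((real n+2)^2+u) * (D*b)^2) * ((real n+2) * (real n+1) * ((real n+1)^2+u))"
    by (simp add: algebra_simps power2_eq_square)
  have "0 < (real n+2) * (real n+1) * ((real n+1)^2+u)" using u by (simp add: add_pos_nonneg)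
  with * have "(N*a)^2 * (1+u) * (real n+3) \<le> 162 * (real n+2) * ((real n+2)^2+u) * (D*b)^2"
    by (rule mult_right_le_imp_le)
  then show ?case unfolding NS DS by (simp add: algebra_simps)
qed

lemma cmod_poch_sq:
  fixes z :: complex
  shows "cmod (pochhammer z m)^2 = (\<Prod>k<m. ((Re z + real k)^2 + (Im z)^2))"
proof -
  have "cmod (pochhammer z m) = (\<Prod>k<m. cmod (z + of_nat k))"
    by (simp add: pochhammer_prod prod_norm lessThan_atLeast0)
  hence "cmod (pochhammer z m)^2 = (\<Prod>k<m. cmod (z + of_nat k)^2)"
    by (simp add: prod_power_distrib)
  also have "\<dots> = (\<Prod>k<m. ((Re z + real k)^2 + (Im z)^2))"
    by (intro prod.cong refl) (simp add: cmod_power2)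
  finally show ?thesis .
qed

lemma cmod_Gamma_series:
  fixes z :: complex assumes "n > 0"
  shows "cmod (Gamma_series z n) = fact n * exp (Re z * ln (real n)) / cmod (pochhammer z (n+1))"
  by (simp add: Gamma_series_def norm_divide norm_mult)

lemma not_nonpos_Int_Complex:
  assumes "0 < x" shows "Complex x y \<notin> \<int>\<^sub>\<le>\<^sub>0"
proof
  assume "Complex x y \<in> \<int>\<^sub>\<le>\<^sub>0"
  then obtain n where "Complex x y = - of_nat n" by (auto elim!: nonpos_Ints_cases')
  hence "x = - real n" by (simp add: complex_eq_iff)
  with assms show False by simp
qed

lemma ratio_bound:
  fixes y :: real
  shows "(cmod (Gamma (Complex (1/4) y)) / cmod (Gamma (Complex (3/4) y)))^4 \<le> 810 / (1 + y^2)"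
proof -
  define z1 where "z1 = Complex (1/4) y"
  define z2 where "z2 = Complex (3/4) y"
  define u where "u = y^2"
  have u: "u \<ge> 0" by (simp add: u_def)
  have nz: "Gamma z2 \<noteq> 0" unfolding z2_def by (intro Gamma_nonzero not_nonpos_Int_Complex) auto
  have lim: "(\<lambda>n. (cmod (Gamma_series z1 n) / cmod (Gamma_series z2 n))^4)
      \<longlonglongrightarrow> (cmod (Gamma z1) / cmod (Gamma z2))^4"
    using nz by (intro tendsto_intros) auto
  have ev: "eventually (\<lambda>n. (cmod (Gamma_series z1 n) / cmod (Gamma_series z2 n))^4 \<le> 810 / (1 + u)) sequentially"
    using eventually_ge_at_top[of "nat \<lceil>u\<rceil> + 1"]
  proof eventually_elim
    case (elim n)
    have n1: "real n \<ge> 1" using elim by simp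
    have nu: "real n \<ge> u" using elim by linarith
    define N where "N = (\<Prod>k<n+1. ((real k+3/4)^2+u))"
    define D where "D = (\<Prod>k<n+1. ((real k+1/4)^2+u))"
    have Npos: "N > 0" unfolding N_def using u by (intro prod_pos) (auto intro: add_pos_nonneg)
    have Dpos: "D > 0" unfolding D_def using u by (intro prod_pos) (auto intro: add_pos_nonneg)
    have P1: "cmod (pochhammer z1 (n+1))^2 = D" unfolding D_def z1_def u_def
      by (simp add: cmod_poch_sq add.commute)
    have P2: "cmod (pochhammer z2 (n+1))^2 = N" unfolding N_def z2_def u_def
      by (simp add: cmod_poch_sq add.commute)
    have p1: "cmod (pochhammer z1 (n+1)) > 0" 
      using P1 Dpos by (metis norm_ge_zero order_le_less power_zero_numeral zero_less_numeral less_irrefl)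
    have p2: "cmod (pochhammer z2 (n+1)) > 0" 
      using P2 Npos by (metis norm_ge_zero order_le_less power_zero_numeral zero_less_numeral less_irrefl)
    define L where "L = ln (real n)"
    have eL: "exp L = real n" using n1 by (simp add: L_def)
    have r: "cmod (Gamma_series z1 n) / cmod (Gamma_series z2 n)
        = exp (1/4 * L) / exp (3/4 * L) * (cmod (pochhammer z2 (n+1)) / cmod (pochhammer z1 (n+1)))"
    proof -
      have n0: "n > 0" using n1 by simp
      have g1: "cmod (Gamma_series z1 n) = fact n * exp (1/4 * L) / cmod (pochhammer z1 (n+1))"
        using cmod_Gamma_series[OF n0, of z1] by (simp add: z1_def L_def)
      have g2: "cmod (Gamma_series z2 n) = fact n * exp (3/4 * L) / cmod (pochhammer z2 (n+1))"
        using cmod_Gamma_series[OF n0, of z2] by (simp add: z2_def L_def)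
      have f: "(fact n :: real) > 0" by simp
      show ?thesis unfolding g1 g2 using f p1 p2 by (simp add: divide_simps)
    qed
    have e: "(exp (1/4 * L) / exp (3/4 * L))^4 = 1 / real n ^ 2"
    proof -
      have ee: "exp (1/4 * L) / exp (3/4 * L) = exp (- (L/2))"
        unfolding exp_diff[symmetric] by (rule arg_cong[where f=exp]) simp
      have "(exp (1/4 * L) / exp (3/4 * L))^4 = exp (- (L/2)) ^ 4" unfolding ee ..
      also have "\<dots> = exp (of_nat 4 * (- (L/2)))" by (simp only: exp_of_nat_mult)
      also have "\<dots> = inverse (exp L ^ 2)" by (simp add: exp_minus exp_of_nat_mult[symmetric])
      finally show ?thesis using eL by (simp add: field_simps)
    qed
    have c4: "(cmod (pochhammer z2 (n+1)) / cmod (pochhammer z1 (n+1)))^4 = N^2 / D^2"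
      unfolding P1[symmetric] P2[symmetric] by (simp add: power_divide flip: power_mult)
    have eq: "(cmod (Gamma_series z1 n) / cmod (Gamma_series z2 n))^4
        = 1 / real n ^ 2 * (N^2 / D^2)"
      unfolding r power_mult_distrib e c4 ..
    have "N^2 / D^2 \<le> 162 * ((real n+1)^2+u) / (1+u)"
    proof -
      have pb: "N^2 * (1+u) * (real n+2) \<le> 162 * (real n+1) * ((real n+1)^2+u) * D^2"
        using prod_bound[OF u, of n] unfolding N_def D_def .
      have "162 * (real n+1) * ((real n+1)^2+u) * D^2 \<le> 162 * (real n+2) * ((real n+1)^2+u) * D^2"
        using u by (intro mult_right_mono mult_left_mono) auto
      from order_trans[OF pb this]
      have "(N^2 * (1+u)) * (real n+2) \<le> (162 * ((real n+1)^2+u) * D^2) * (real n+2)"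
        by (simp only: ac_simps)
      hence A: "N^2 * (1+u) \<le> 162 * ((real n+1)^2+u) * D^2"
        by (rule mult_right_le_imp_le) simp
      have D2: "D^2 > 0" using Dpos by simp
      have "N^2 / D^2 * (1+u) \<le> 162 * ((real n+1)^2+u)"
        using A D2 by (simp add: field_simps)
      thus ?thesis using u by (simp add: field_simps)
    qed
    hence "1 / real n ^ 2 * (N^2 / D^2) \<le> 1 / real n ^ 2 * (162 * ((real n+1)^2+u) / (1+u))"
      by (intro mult_left_mono) auto
    also have "\<dots> \<le> 810 / (1+u)"
    proof -
      have h1: "real n * 1 \<le> real n * real n" using n1 by (intro mult_left_mono) auto
      have e1: "(real n+1)^2 = real n*real n + 2*real n + 1" by (simp add: power2_eq_square algebra_simps)
      have e2: "real n^2 = real n * real n" by (simp add: power2_eq_square)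
      have X: "(real n+1)^2 + u \<le> 5 * real n ^ 2"
        unfolding e1 e2 using h1 n1 nu by linarith
      have n2: "real n ^ 2 > 0" using n1 by simp
      have X5: "((real n+1)^2 + u) / real n ^ 2 \<le> 5" using X n2 by (simp add: divide_le_eq)
      have "1 / real n ^ 2 * (162 * ((real n+1)^2+u) / (1+u))
          = (162 / (1+u)) * (((real n+1)^2 + u) / real n ^ 2)" by (simp add: field_simps)
      also have "\<dots> \<le> (162 / (1+u)) * 5" using X5 u by (intro mult_left_mono) auto
      also have "\<dots> = 810 / (1+u)" by simp
      finally show ?thesis .
    qed
    finally show ?case unfolding eq .
  qed
  have "(cmod (Gamma z1) / cmod (Gamma z2))^4 \<le> 810 / (1+u)"
    using lim ev by (rule tendsto_upperbound) simp
  thus ?thesis by (simp add: z1_def z2_def u_def)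
qed

lemma refl_norm:
  fixes x y :: real
  shows "cmod (Gamma (Complex x y)) * cmod (Gamma (Complex (1 - x) y)) = pi / cmod (sin (of_real pi * Complex x y))"
proof -
  have "Gamma (Complex x y) * Gamma (1 - Complex x y) = of_real pi / sin (of_real pi * Complex x y)"
    by (rule Gamma_reflection_complex)
  moreover have "1 - Complex x y = cnj (Complex (1 - x) y)" by (simp add: complex_eq_iff)
  ultimately have "Gamma (Complex x y) * cnj (Gamma (Complex (1 - x) y)) = of_real pi / sin (of_real pi * Complex x y)"
    by (simp add: cnj_Gamma)
  hence "cmod (Gamma (Complex x y) * cnj (Gamma (Complex (1 - x) y))) = cmod (of_real pi / sin (of_real pi * Complex x y))"
    by simp
  thus ?thesis by (simp add: norm_mult norm_divide)
qed

lemma sin_sq: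
  fixes x y :: real
  shows "cmod (sin (of_real pi * Complex x y))^2 = (exp (2 * (pi*y)) + inverse (exp (2 * (pi*y))) - 2 * cos (2 * (pi*x))) / 4"
  using norm_sin_squared[of "of_real pi * Complex x y"] by simp

lemma prod14:
  fixes y :: real
  shows "(cmod (Gamma (Complex (1/4) y)) * cmod (Gamma (Complex (3/4) y)))^2 \<le> 4 * pi^2 * exp (-2*pi*\<bar>y\<bar>)"
proof -
  have c: "cos (2 * (pi * (1/4))) = 0" by simp
  have s: "cmod (sin (of_real pi * Complex (1/4) y))^2 = (exp (2 * (pi*y)) + inverse (exp (2 * (pi*y)))) / 4"
    using sin_sq[of "1/4" y] c by simp
  have ge: "exp (2*pi*\<bar>y\<bar>) \<le> exp (2 * (pi*y)) + inverse (exp (2 * (pi*y)))"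
  proof (cases "y \<ge> 0")
    case True
    hence "exp (2*pi*\<bar>y\<bar>) = exp (2*(pi*y))" by (simp add: mult.assoc)
    moreover have "inverse (exp (2 * (pi*y))) > 0" by simp
    ultimately show ?thesis by linarith
  next
    case False
    hence "exp (2*pi*\<bar>y\<bar>) = inverse (exp (2 * (pi*y)))" by (simp add: exp_minus[symmetric])
    thus ?thesis by simp
  qed
  have sp: "cmod (sin (of_real pi * Complex (1/4) y))^2 \<ge> exp (2*pi*\<bar>y\<bar>) / 4" using s ge by simp
  have "(cmod (Gamma (Complex (1/4) y)) * cmod (Gamma (Complex (3/4) y)))^2
     = pi^2 / cmod (sin (of_real pi * Complex (1/4) y))^2"
    using refl_norm[of "1/4" y] by (simp add: power_divide)
  also have "\<dots> \<le> pi^2 / (exp (2*pi*\<bar>y\<bar>) / 4)"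
  proof -
    have spos: "0 < cmod (sin (of_real pi * Complex (1/4) y))^2"
      using sp exp_gt_zero[of "2*pi*\<bar>y\<bar>"] by linarith
    show ?thesis using sp spos by (intro divide_left_mono) auto
  qed
  also have "\<dots> = 4 * pi^2 * exp (-2*pi*\<bar>y\<bar>)" by (simp add: exp_minus field_simps)
  finally show ?thesis .
qed

lemma half_bound:
  fixes w :: real
  shows "1 / cmod (Gamma (Complex (1/2) w))^2 \<le> exp (pi*\<bar>w\<bar>) / pi"
proof -
  have c: "cos (2 * (pi * (1/2))) = -1" by simp
  have s: "cmod (sin (of_real pi * Complex (1/2) w))^2 = (exp (2 * (pi*w)) + inverse (exp (2 * (pi*w))) + 2) / 4"
    using sin_sq[of "1/2" w] c by simp
  have le: "exp (2 * (pi*w)) + inverse (exp (2 * (pi*w))) + 2 \<le> 4 * exp (2*pi*\<bar>w\<bar>)"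
  proof -
    have a: "exp (2 * (pi*w)) \<le> exp (2*pi*\<bar>w\<bar>)" by simp
    have m: "-(pi*w) \<le> pi*\<bar>w\<bar>"
    proof (cases "w \<ge> 0")
      case True thus ?thesis using pi_gt_zero by (simp add: mult_nonneg_nonneg)
    qed simp
    have b: "inverse (exp (2 * (pi*w))) \<le> exp (2*pi*\<bar>w\<bar>)" using m by (simp add: exp_minus[symmetric])
    have d: "1 \<le> exp (2*pi*\<bar>w\<bar>)" by simp
    show ?thesis using a b d by linarith
  qed
  have "cmod (sin (of_real pi * Complex (1/2) w))^2 \<le> (exp (pi*\<bar>w\<bar>))^2"
  proof -
    have E: "(exp (pi*\<bar>w\<bar>))^2 = exp (2*pi*\<bar>w\<bar>)" using exp_double[of "pi*\<bar>w\<bar>"] by (simp add: mult.assoc)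
    have g: "\<And>A C::real. A \<le> 4*C \<Longrightarrow> A/4 \<le> C" by linarith
    show ?thesis unfolding E s by (rule g[OF le])
  qed
  hence sl: "cmod (sin (of_real pi * Complex (1/2) w)) \<le> exp (pi*\<bar>w\<bar>)"
    by (rule power2_le_imp_le) simp
  have "cmod (Gamma (Complex (1/2) w))^2 = pi / cmod (sin (of_real pi * Complex (1/2) w))"
    using refl_norm[of "1/2" w] by (simp add: power2_eq_square)
  hence "1 / cmod (Gamma (Complex (1/2) w))^2 = cmod (sin (of_real pi * Complex (1/2) w)) / pi"
    by simp
  also have "\<dots> \<le> exp (pi*\<bar>w\<bar>) / pi" using sl by (intro divide_right_mono) auto
  finally show ?thesis .
qed

lemma gbound:
  fixes y :: real
  shows "cmod (Gamma (Complex (1/4) y))^2 \<le> 17 * pi * exp (-pi*\<bar>y\<bar>) / sqrt (1 + 2*\<bar>y\<bar>)"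
proof -
  define a where "a = cmod (Gamma (Complex (1/4) y))"
  define b where "b = cmod (Gamma (Complex (3/4) y))"
  define e where "e = exp (-pi*\<bar>y\<bar>)"
  define q where "q = 1 + 2*\<bar>y\<bar>"
  have q: "q \<ge> 1" by (simp add: q_def)
  have e: "e > 0" by (simp add: e_def)
  have bnz: "b > 0" unfolding b_def using Gamma_nonzero[OF not_nonpos_Int_Complex[of "3/4" y]] by simp
  have a0: "a \<ge> 0" by (simp add: a_def)
  have E2: "exp (-2*pi*\<bar>y\<bar>) = e^2" unfolding e_def using exp_double[of "-pi*\<bar>y\<bar>"] by (simp add: mult.assoc)
  have h1: "(a*b)^2 \<le> 4*pi^2*e^2" using prod14[of y] unfolding a_def b_def E2 .
  have h2: "(a/b)^4 \<le> 810 / (1 + y^2)" using ratio_bound[of y] unfolding a_def b_def .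
  have h3: "810 / (1 + y^2) \<le> 4860 / q^2"
  proof -
    have "q^2 \<le> 6 * (1 + y^2)"
    proof -
      have "q^2 = 1 + 4*\<bar>y\<bar> + 4*\<bar>y\<bar>^2" by (simp add: q_def power2_eq_square algebra_simps)
      moreover have "4*\<bar>y\<bar> \<le> 2 + 2*\<bar>y\<bar>^2" using sum_squares_ge_zero[of "\<bar>y\<bar> - 1" 0]
        by (simp add: power2_eq_square algebra_simps)
      ultimately show ?thesis by simp
    qed
    moreover have "q^2 > 0" using q by simp
    moreover have "1 + y^2 > 0" by (simp add: add_pos_nonneg)
    ultimately show ?thesis by (simp add: field_simps)
  qed
  have sq4: "sqrt q ^ 4 = q^2"
  proof -
    have "sqrt q ^ 4 = (sqrt q ^ 2)^2" by (simp flip: power_mult)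
    thus ?thesis using q by simp
  qed
  have a8: "a^8 = ((a*b)^2)^2 * (a/b)^4" using bnz by (simp add: field_simps flip: power_mult)
  have "((a*b)^2)^2 \<le> (4*pi^2*e^2)^2" using h1 by (intro power_mono) auto
  hence "a^8 \<le> (4*pi^2*e^2)^2 * (4860 / q^2)"
    unfolding a8 using h2 h3 by (intro mult_mono) auto
  also have "\<dots> = (17*pi*e/sqrt q)^4 * (77760 / 83521)"
    using q sq4 by (simp add: field_simps power_mult_distrib power_divide flip: power_mult)
  also have "\<dots> \<le> (17*pi*e/sqrt q)^4" by simp
  finally have "(a^2)^4 \<le> (17*pi*e/sqrt q)^4" by (simp flip: power_mult)
  hence "a^2 \<le> 17*pi*e/sqrt q" using power_le_imp_le_base[of "a^2" 3 "17*pi*e/sqrt q"] e q by (simp add: eval_nat_numeral)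
  thus ?thesis unfolding a_def e_def q_def by simp
qed

lemma Xsum:
  fixes \<alpha> \<beta> \<gamma> X :: real
  assumes "\<gamma> \<le> 0" "0 \<le> \<beta>" "\<beta> \<le> \<alpha>" "\<alpha> + \<beta> + \<gamma> = 0"
  shows "\<bar>X-\<alpha>\<bar> + \<bar>X-\<beta>\<bar> + \<bar>X-\<gamma>\<bar> - X \<ge> 2*\<alpha>"
    "\<bar>X-\<alpha>\<bar> + \<bar>X-\<beta>\<bar> + \<bar>X-\<gamma>\<bar> - X \<ge> 2*\<alpha> + 2*(\<beta> - X)"
    "\<bar>X-\<alpha>\<bar> + \<bar>X-\<beta>\<bar> + \<bar>X-\<gamma>\<bar> - X \<ge> 2*\<alpha> + 2*(X - \<alpha>)"
    "\<bar>X-\<alpha>\<bar> + \<bar>X-\<beta>\<bar> + \<bar>X-\<gamma>\<bar> + X \<ge> -2*\<gamma>"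
    "\<bar>X-\<alpha>\<bar> + \<bar>X-\<beta>\<bar> + \<bar>X-\<gamma>\<bar> + X \<ge> -2*\<gamma> + 2*(\<gamma> - X)"
    "\<bar>X-\<alpha>\<bar> + \<bar>X-\<beta>\<bar> + \<bar>X-\<gamma>\<bar> + X \<ge> -2*\<gamma> + 2*(X - \<beta>)"
  using assms by (auto simp: abs_if)

lemma argp: "((1/2 + \<i> * of_real t) + \<i> * of_real \<tau> - \<i> * of_real \<mu>) / 2 = Complex (1/4) ((t+\<tau>-\<mu>)/2)"
  by (simp add: complex_eq_iff)
lemma argm: "((1/2 + \<i> * of_real t) - \<i> * of_real \<tau> - \<i> * of_real \<mu>) / 2 = Complex (1/4) ((t-\<tau>-\<mu>)/2)"
  by (simp add: complex_eq_iff)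
lemma argd: "(1 + \<i> * of_real a - \<i> * of_real b) / 2 = Complex (1/2) ((a-b)/2)"
  by (simp add: complex_eq_iff)

lemma gbound':
  fixes Z \<mu> :: real
  shows "cmod (Gamma (Complex (1/4) ((Z-\<mu>)/2)))^2 \<le> 17 * pi * exp (-pi*\<bar>Z-\<mu>\<bar>/2) / sqrt (1 + \<bar>Z-\<mu>\<bar>)"
  using gbound[of "(Z-\<mu>)/2"] by simp

lemma half_bound':
  fixes a b :: real
  shows "1 / cmod (Gamma (Complex (1/2) ((a-b)/2)))^2 \<le> exp (pi*\<bar>a-b\<bar>/2) / pi"
  using half_bound[of "(a-b)/2"] by simp

lemma normG:
  "cmod (G_tau \<alpha> \<beta> \<gamma> \<tau> (1/2 + \<i> * of_real t))^2 =
     (cmod (Gamma (Complex (1/4) ((t+\<tau>-\<alpha>)/2)))^2 * cmod (Gamma (Complex (1/4) ((t-\<tau>-\<alpha>)/2)))^2 *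
      cmod (Gamma (Complex (1/4) ((t+\<tau>-\<beta>)/2)))^2 * cmod (Gamma (Complex (1/4) ((t-\<tau>-\<beta>)/2)))^2 *
      cmod (Gamma (Complex (1/4) ((t+\<tau>-\<gamma>)/2)))^2 * cmod (Gamma (Complex (1/4) ((t-\<tau>-\<gamma>)/2)))^2) *
     ((1 / cmod (Gamma (Complex (1/2) ((\<gamma>-\<beta>)/2)))^2) * (1 / cmod (Gamma (Complex (1/2) ((\<beta>-\<alpha>)/2)))^2) *
      (1 / cmod (Gamma (Complex (1/2) ((\<gamma>-\<alpha>)/2)))^2))"
proof -
  have p1: "cmod (complex_of_real pi powr (-3 * (1/2 + \<i> * of_real t))) = pi powr (-3/2)"
    by (subst norm_powr_real_powr) auto
  have p2: "cmod (complex_of_real pi powr (- 3 / 2 + \<i> * of_real \<alpha> - \<i> * of_real \<gamma>)) = pi powr (-3/2)"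
    by (subst norm_powr_real_powr) auto
  have pp: "pi powr (-3/2) > 0" by simp
  show ?thesis
    unfolding G_tau_def Gamma_pm_def argp argm argd norm_divide norm_mult p1 p2
    using pp by (simp add: field_simps power_mult_distrib power_divide)
qed

lemma cosh_le: fixes x :: real assumes "0 \<le> x" shows "cosh x \<le> exp x"
proof -
  have "exp (-x) \<le> exp x" using assms by simp
  thus ?thesis by (simp add: cosh_def)
qed

lemma master:
  fixes \<alpha> \<beta> \<gamma> t \<tau> :: real
  assumes "0 \<le> \<tau>"
  shows "cosh (pi * \<tau>) * (cmod (G_tau \<alpha> \<beta> \<gamma> \<tau> (1/2 + \<i> * of_real t)))\<^sup>2 \<le>
    17^6 * pi^3 * exp (pi * (\<tau> + (\<bar>\<gamma>-\<beta>\<bar> + \<bar>\<beta>-\<alpha>\<bar> + \<bar>\<gamma>-\<alpha>\<bar>)/2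
        - (\<bar>t+\<tau>-\<alpha>\<bar> + \<bar>t+\<tau>-\<beta>\<bar> + \<bar>t+\<tau>-\<gamma>\<bar> + \<bar>t-\<tau>-\<alpha>\<bar> + \<bar>t-\<tau>-\<beta>\<bar> + \<bar>t-\<tau>-\<gamma>\<bar>)/2))
    / sqrt (qF1 \<alpha> \<beta> \<gamma> (t + \<tau>) * qF1 \<alpha> \<beta> \<gamma> (t - \<tau>))"
proof -
  let ?f = "\<lambda>Z \<mu>. 17 * pi * exp (-pi*\<bar>Z-\<mu>\<bar>/2) / sqrt (1 + \<bar>Z-\<mu>\<bar>)"
  let ?h = "\<lambda>a b. exp (pi*\<bar>a-b\<bar>/2) / pi"
  have G: "cmod (G_tau \<alpha> \<beta> \<gamma> \<tau> (1/2 + \<i> * of_real t))^2 \<le>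
     (?f (t+\<tau>) \<alpha> * ?f (t-\<tau>) \<alpha> * ?f (t+\<tau>) \<beta> * ?f (t-\<tau>) \<beta> * ?f (t+\<tau>) \<gamma> * ?f (t-\<tau>) \<gamma>) *
     (?h \<gamma> \<beta> * ?h \<beta> \<alpha> * ?h \<gamma> \<alpha>)"
    unfolding normG
    by (intro mult_mono gbound' half_bound' mult_nonneg_nonneg divide_nonneg_nonneg) auto
  have c: "cosh (pi*\<tau>) \<le> exp (pi*\<tau>)" using assms by (intro cosh_le) simp
  have "cosh (pi * \<tau>) * (cmod (G_tau \<alpha> \<beta> \<gamma> \<tau> (1/2 + \<i> * of_real t)))\<^sup>2 \<le> exp (pi*\<tau>) *
     ((?f (t+\<tau>) \<alpha> * ?f (t-\<tau>) \<alpha> * ?f (t+\<tau>) \<beta> * ?f (t-\<tau>) \<beta> * ?f (t+\<tau>) \<gamma> * ?f (t-\<tau>) \<gamma>) *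
     (?h \<gamma> \<beta> * ?h \<beta> \<alpha> * ?h \<gamma> \<alpha>))"
    using c G by (intro mult_mono) auto
  also have "\<dots> = 17^6 * pi^3 * exp (pi * (\<tau> + (\<bar>\<gamma>-\<beta>\<bar> + \<bar>\<beta>-\<alpha>\<bar> + \<bar>\<gamma>-\<alpha>\<bar>)/2
        - (\<bar>t+\<tau>-\<alpha>\<bar> + \<bar>t+\<tau>-\<beta>\<bar> + \<bar>t+\<tau>-\<gamma>\<bar> + \<bar>t-\<tau>-\<alpha>\<bar> + \<bar>t-\<tau>-\<beta>\<bar> + \<bar>t-\<tau>-\<gamma>\<bar>)/2))
    / sqrt (qF1 \<alpha> \<beta> \<gamma> (t + \<tau>) * qF1 \<alpha> \<beta> \<gamma> (t - \<tau>))"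
  proof -
    have ex: "exp (pi*\<tau>) * (exp (-pi*\<bar>t+\<tau>-\<alpha>\<bar>/2) * exp (-pi*\<bar>t-\<tau>-\<alpha>\<bar>/2) * exp (-pi*\<bar>t+\<tau>-\<beta>\<bar>/2)
        * exp (-pi*\<bar>t-\<tau>-\<beta>\<bar>/2) * exp (-pi*\<bar>t+\<tau>-\<gamma>\<bar>/2) * exp (-pi*\<bar>t-\<tau>-\<gamma>\<bar>/2))
        * (exp (pi*\<bar>\<gamma>-\<beta>\<bar>/2) * exp (pi*\<bar>\<beta>-\<alpha>\<bar>/2) * exp (pi*\<bar>\<gamma>-\<alpha>\<bar>/2))
       = exp (pi * (\<tau> + (\<bar>\<gamma>-\<beta>\<bar> + \<bar>\<beta>-\<alpha>\<bar> + \<bar>\<gamma>-\<alpha>\<bar>)/2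
        - (\<bar>t+\<tau>-\<alpha>\<bar> + \<bar>t+\<tau>-\<beta>\<bar> + \<bar>t+\<tau>-\<gamma>\<bar> + \<bar>t-\<tau>-\<alpha>\<bar> + \<bar>t-\<tau>-\<beta>\<bar> + \<bar>t-\<tau>-\<gamma>\<bar>)/2))"
      unfolding mult_exp_exp by (rule arg_cong[where f=exp]) (simp add: field_simps)
    have sq: "sqrt (1 + \<bar>t+\<tau>-\<alpha>\<bar>) * sqrt (1 + \<bar>t-\<tau>-\<alpha>\<bar>) * sqrt (1 + \<bar>t+\<tau>-\<beta>\<bar>) * sqrt (1 + \<bar>t-\<tau>-\<beta>\<bar>)
        * sqrt (1 + \<bar>t+\<tau>-\<gamma>\<bar>) * sqrt (1 + \<bar>t-\<tau>-\<gamma>\<bar>) = sqrt (qF1 \<alpha> \<beta> \<gamma> (t + \<tau>) * qF1 \<alpha> \<beta> \<gamma> (t - \<tau>))"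
      unfolding qF1_def real_sqrt_mult by (simp add: mult_ac)
    show ?thesis unfolding ex[symmetric] sq[symmetric] by (simp add: field_simps power3_eq_cube)
  qed
  finally show ?thesis .
qed

lemma qF1_ge: "qF1 \<alpha> \<beta> \<gamma> Z \<ge> 1"
proof -
  have "1 * 1 * 1 \<le> (1 + \<bar>Z - \<alpha>\<bar>) * (1 + \<bar>Z - \<beta>\<bar>) * (1 + \<bar>Z - \<gamma>\<bar>)"
    by (intro mult_mono) auto
  thus ?thesis by (simp add: qF1_def)
qed

lemma fin1:
  fixes C E B Q :: real
  assumes "C \<ge> 0" "Q \<ge> 1" "E \<le> - B"
  shows "C * exp (pi * E) / sqrt Q \<le> C * exp (- pi * B)"
proof -
  have "pi * E \<le> pi * (- B)" using assms(3) pi_gt_zero by (intro mult_left_mono) auto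
  hence a: "exp (pi * E) \<le> exp (- pi * B)" by simp
  have b: "sqrt Q \<ge> 1" using assms(2) by simp
  have "exp (pi * E) / sqrt Q \<le> exp (pi * E)" using b by (simp add: divide_le_eq mult_le_cancel_left1)
  hence "exp (pi * E) / sqrt Q \<le> exp (- pi * B)" using a by linarith
  hence "C * (exp (pi * E) / sqrt Q) \<le> C * exp (- pi * B)" using assms(1) by (rule mult_left_mono)
  thus ?thesis by simp
qed

lemma fin3:
  fixes C E Q :: real
  assumes "C \<ge> 0" "Q \<ge> 1" "E \<le> 0"
  shows "C * exp (pi * E) / sqrt Q \<le> C * Q powr (- 1 / 2)"
proof -
  have a: "exp (pi * E) \<le> 1" using assms(3) pi_gt_zero by (simp add: mult_nonneg_nonpos)
  have b: "sqrt Q > 0" using assms(2) by simp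
  have q: "Q powr (- 1 / 2) = 1 / sqrt Q" using assms(2)
    by (simp add: powr_minus_divide powr_half_sqrt)
  have "exp (pi * E) / sqrt Q \<le> 1 / sqrt Q" using a b by (simp add: divide_right_mono)
  hence "C * (exp (pi * E) / sqrt Q) \<le> C * (1 / sqrt Q)" using assms(1) by (rule mult_left_mono)
  thus ?thesis unfolding q by simp
qed


lemma comb:
  fixes a b c d e f t \<tau> \<alpha> \<beta> \<gamma> P R :: real
  assumes "a + b + c - (t+\<tau>) \<ge> 2*\<alpha> + 2*P" "d + e + f + (t-\<tau>) \<ge> -2*\<gamma> + 2*R"
  shows "\<tau> + (\<beta> - \<gamma> + (\<alpha> - \<beta>) + (\<alpha> - \<gamma>)) / 2 - (a + b + c + d + e + f) / 2 \<le> -(P+R)"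
  using assms by (simp add: field_simps)

theorem lemma6p2:
  shows
  "(\<exists>C. \<forall>\<alpha> \<beta> \<gamma> t \<tau> X0. \<gamma> \<le> 0 \<and> 0 \<le> \<beta> \<and> \<beta> \<le> \<alpha> \<and> \<alpha> + \<beta> + \<gamma> = 0 \<and>
        t + \<tau> \<ge> t - \<tau> \<and> X0 \<ge> 0 \<and> t + \<tau> \<notin> {\<beta> - X0 .. \<alpha> + X0} \<longrightarrow>
        cosh (pi * \<tau>) * (cmod (G_tau \<alpha> \<beta> \<gamma> \<tau> (1/2 + \<i> * of_real t)))\<^sup>2 \<le> C * exp (- pi * X0))
   \<and> (\<exists>C. \<forall>\<alpha> \<beta> \<gamma> t \<tau> Y0. \<gamma> \<le> 0 \<and> 0 \<le> \<beta> \<and> \<beta> \<le> \<alpha> \<and> \<alpha> + \<beta> + \<gamma> = 0 \<and>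
        t + \<tau> \<ge> t - \<tau> \<and> Y0 \<ge> 0 \<and> t - \<tau> \<notin> {\<gamma> - Y0 .. \<beta> + Y0} \<longrightarrow>
        cosh (pi * \<tau>) * (cmod (G_tau \<alpha> \<beta> \<gamma> \<tau> (1/2 + \<i> * of_real t)))\<^sup>2 \<le> C * exp (- pi * Y0))
   \<and> (\<exists>C. \<forall>\<alpha> \<beta> \<gamma> t \<tau> X0 Y0. \<gamma> \<le> 0 \<and> 0 \<le> \<beta> \<and> \<beta> \<le> \<alpha> \<and> \<alpha> + \<beta> + \<gamma> = 0 \<and>
        t + \<tau> \<ge> t - \<tau> \<and> X0 \<ge> 0 \<and> Y0 \<ge> 0 \<and>
        \<beta> - X0 \<le> t + \<tau> \<and> t + \<tau> \<le> \<alpha> + X0 \<and> \<gamma> - Y0 \<le> t - \<tau> \<and> t - \<tau> \<le> \<beta> + Y0 \<longrightarrow>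
        cosh (pi * \<tau>) * (cmod (G_tau \<alpha> \<beta> \<gamma> \<tau> (1/2 + \<i> * of_real t)))\<^sup>2
          \<le> C * (qF1 \<alpha> \<beta> \<gamma> (t + \<tau>) * qF1 \<alpha> \<beta> \<gamma> (t - \<tau>)) powr (- 1 / 2))"
proof (intro conjI)
  define C :: real where "C = 17^6 * pi^3"
  have C0: "C \<ge> 0" by (simp add: C_def)
  note ab = abs_of_nonneg abs_of_nonpos
  show "\<exists>C. \<forall>\<alpha> \<beta> \<gamma> t \<tau> X0. \<gamma> \<le> 0 \<and> 0 \<le> \<beta> \<and> \<beta> \<le> \<alpha> \<and> \<alpha> + \<beta> + \<gamma> = 0 \<and>
        t + \<tau> \<ge> t - \<tau> \<and> X0 \<ge> 0 \<and> t + \<tau> \<notin> {\<beta> - X0 .. \<alpha> + X0} \<longrightarrow>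
        cosh (pi * \<tau>) * (cmod (G_tau \<alpha> \<beta> \<gamma> \<tau> (1/2 + \<i> * of_real t)))\<^sup>2 \<le> C * exp (- pi * X0)"
  proof (intro exI[of _ C] allI impI, elim conjE)
    fix \<alpha> \<beta> \<gamma> t \<tau> X0 :: real
    assume h: "\<gamma> \<le> 0" "0 \<le> \<beta>" "\<beta> \<le> \<alpha>" "\<alpha> + \<beta> + \<gamma> = 0" "t + \<tau> \<ge> t - \<tau>" "X0 \<ge> 0"
      "t + \<tau> \<notin> {\<beta> - X0 .. \<alpha> + X0}"
    have tau: "\<tau> \<ge> 0" using h by simp
    note X = Xsum[OF h(1-4), of "t+\<tau>"] and Y = Xsum[OF h(1-4), of "t-\<tau>"]
    have d: "\<bar>\<gamma>-\<beta>\<bar> = \<beta> - \<gamma>" "\<bar>\<beta>-\<alpha>\<bar> = \<alpha> - \<beta>" "\<bar>\<gamma>-\<alpha>\<bar> = \<alpha> - \<gamma>" using h by auto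
    have E: "\<tau> + (\<bar>\<gamma>-\<beta>\<bar> + \<bar>\<beta>-\<alpha>\<bar> + \<bar>\<gamma>-\<alpha>\<bar>)/2
        - (\<bar>t+\<tau>-\<alpha>\<bar> + \<bar>t+\<tau>-\<beta>\<bar> + \<bar>t+\<tau>-\<gamma>\<bar> + \<bar>t-\<tau>-\<alpha>\<bar> + \<bar>t-\<tau>-\<beta>\<bar> + \<bar>t-\<tau>-\<gamma>\<bar>)/2 \<le> - X0" (is "?E \<le> _")
    proof -
      have "t + \<tau> < \<beta> - X0 \<or> t + \<tau> > \<alpha> + X0" using h(7) by auto
      thus ?thesis
      proof
        assume a: "t + \<tau> < \<beta> - X0"
        have c: "?E \<le> -((\<beta> - (t+\<tau>)) + 0)" unfolding d by (rule comb) (use X(2) Y(4) in auto)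
        show ?thesis using c a by linarith
      next
        assume a: "t + \<tau> > \<alpha> + X0"
        have c: "?E \<le> -(((t+\<tau>) - \<alpha>) + 0)" unfolding d by (rule comb) (use X(3) Y(4) in auto)
        show ?thesis using c a by linarith
      qed
    qed
    have Q: "qF1 \<alpha> \<beta> \<gamma> (t + \<tau>) * qF1 \<alpha> \<beta> \<gamma> (t - \<tau>) \<ge> 1"
      using qF1_ge[of \<alpha> \<beta> \<gamma>] by (metis mult_mono' mult_1 zero_le_one)
    show "cosh (pi * \<tau>) * (cmod (G_tau \<alpha> \<beta> \<gamma> \<tau> (1/2 + \<i> * of_real t)))\<^sup>2 \<le> C * exp (- pi * X0)"
      using master[OF tau, of \<alpha> \<beta> \<gamma> t] fin1[OF C0 Q E] unfolding C_def by linarith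
  qed
  show "\<exists>C. \<forall>\<alpha> \<beta> \<gamma> t \<tau> Y0. \<gamma> \<le> 0 \<and> 0 \<le> \<beta> \<and> \<beta> \<le> \<alpha> \<and> \<alpha> + \<beta> + \<gamma> = 0 \<and>
        t + \<tau> \<ge> t - \<tau> \<and> Y0 \<ge> 0 \<and> t - \<tau> \<notin> {\<gamma> - Y0 .. \<beta> + Y0} \<longrightarrow>
        cosh (pi * \<tau>) * (cmod (G_tau \<alpha> \<beta> \<gamma> \<tau> (1/2 + \<i> * of_real t)))\<^sup>2 \<le> C * exp (- pi * Y0)"
  proof (intro exI[of _ C] allI impI, elim conjE)
    fix \<alpha> \<beta> \<gamma> t \<tau> Y0 :: real
    assume h: "\<gamma> \<le> 0" "0 \<le> \<beta>" "\<beta> \<le> \<alpha>" "\<alpha> + \<beta> + \<gamma> = 0" "t + \<tau> \<ge> t - \<tau>" "Y0 \<ge> 0"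
      "t - \<tau> \<notin> {\<gamma> - Y0 .. \<beta> + Y0}"
    have tau: "\<tau> \<ge> 0" using h by simp
    note X = Xsum[OF h(1-4), of "t+\<tau>"] and Y = Xsum[OF h(1-4), of "t-\<tau>"]
    have d: "\<bar>\<gamma>-\<beta>\<bar> = \<beta> - \<gamma>" "\<bar>\<beta>-\<alpha>\<bar> = \<alpha> - \<beta>" "\<bar>\<gamma>-\<alpha>\<bar> = \<alpha> - \<gamma>" using h by auto
    have E: "\<tau> + (\<bar>\<gamma>-\<beta>\<bar> + \<bar>\<beta>-\<alpha>\<bar> + \<bar>\<gamma>-\<alpha>\<bar>)/2
        - (\<bar>t+\<tau>-\<alpha>\<bar> + \<bar>t+\<tau>-\<beta>\<bar> + \<bar>t+\<tau>-\<gamma>\<bar> + \<bar>t-\<tau>-\<alpha>\<bar> + \<bar>t-\<tau>-\<beta>\<bar> + \<bar>t-\<tau>-\<gamma>\<bar>)/2 \<le> - Y0" (is "?E \<le> _")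
    proof -
      have "t - \<tau> < \<gamma> - Y0 \<or> t - \<tau> > \<beta> + Y0" using h(7) by auto
      thus ?thesis
      proof
        assume a: "t - \<tau> < \<gamma> - Y0"
        have c: "?E \<le> -(0 + (\<gamma> - (t-\<tau>)))" unfolding d by (rule comb) (use X(1) Y(5) in auto)
        show ?thesis using c a by linarith
      next
        assume a: "t - \<tau> > \<beta> + Y0"
        have c: "?E \<le> -(0 + ((t-\<tau>) - \<beta>))" unfolding d by (rule comb) (use X(1) Y(6) in auto)
        show ?thesis using c a by linarith
      qed
    qed
    have Q: "qF1 \<alpha> \<beta> \<gamma> (t + \<tau>) * qF1 \<alpha> \<beta> \<gamma> (t - \<tau>) \<ge> 1"
      using qF1_ge[of \<alpha> \<beta> \<gamma>] by (metis mult_mono' mult_1 zero_le_one)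
    show "cosh (pi * \<tau>) * (cmod (G_tau \<alpha> \<beta> \<gamma> \<tau> (1/2 + \<i> * of_real t)))\<^sup>2 \<le> C * exp (- pi * Y0)"
      using master[OF tau, of \<alpha> \<beta> \<gamma> t] fin1[OF C0 Q E] unfolding C_def by linarith
  qed
  show "\<exists>C. \<forall>\<alpha> \<beta> \<gamma> t \<tau> X0 Y0. \<gamma> \<le> 0 \<and> 0 \<le> \<beta> \<and> \<beta> \<le> \<alpha> \<and> \<alpha> + \<beta> + \<gamma> = 0 \<and>
        t + \<tau> \<ge> t - \<tau> \<and> X0 \<ge> 0 \<and> Y0 \<ge> 0 \<and>
        \<beta> - X0 \<le> t + \<tau> \<and> t + \<tau> \<le> \<alpha> + X0 \<and> \<gamma> - Y0 \<le> t - \<tau> \<and> t - \<tau> \<le> \<beta> + Y0 \<longrightarrow>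
        cosh (pi * \<tau>) * (cmod (G_tau \<alpha> \<beta> \<gamma> \<tau> (1/2 + \<i> * of_real t)))\<^sup>2
          \<le> C * (qF1 \<alpha> \<beta> \<gamma> (t + \<tau>) * qF1 \<alpha> \<beta> \<gamma> (t - \<tau>)) powr (- 1 / 2)"
  proof (intro exI[of _ C] allI impI, elim conjE)
    fix \<alpha> \<beta> \<gamma> t \<tau> X0 Y0 :: real
    assume h: "\<gamma> \<le> 0" "0 \<le> \<beta>" "\<beta> \<le> \<alpha>" "\<alpha> + \<beta> + \<gamma> = 0" "t + \<tau> \<ge> t - \<tau>"
    have tau: "\<tau> \<ge> 0" using h by simp
    note X = Xsum[OF h(1-4), of "t+\<tau>"] and Y = Xsum[OF h(1-4), of "t-\<tau>"]
    have d: "\<bar>\<gamma>-\<beta>\<bar> = \<beta> - \<gamma>" "\<bar>\<beta>-\<alpha>\<bar> = \<alpha> - \<beta>" "\<bar>\<gamma>-\<alpha>\<bar> = \<alpha> - \<gamma>" using h by auto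
    have E: "\<tau> + (\<bar>\<gamma>-\<beta>\<bar> + \<bar>\<beta>-\<alpha>\<bar> + \<bar>\<gamma>-\<alpha>\<bar>)/2
        - (\<bar>t+\<tau>-\<alpha>\<bar> + \<bar>t+\<tau>-\<beta>\<bar> + \<bar>t+\<tau>-\<gamma>\<bar> + \<bar>t-\<tau>-\<alpha>\<bar> + \<bar>t-\<tau>-\<beta>\<bar> + \<bar>t-\<tau>-\<gamma>\<bar>)/2 \<le> 0" (is "?E \<le> _")
    proof -
      have c: "?E \<le> -(0+0)" unfolding d by (rule comb) (use X(1) Y(4) in auto)
      thus ?thesis by simp
    qed
    have Q: "qF1 \<alpha> \<beta> \<gamma> (t + \<tau>) * qF1 \<alpha> \<beta> \<gamma> (t - \<tau>) \<ge> 1"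
      using qF1_ge[of \<alpha> \<beta> \<gamma>] by (metis mult_mono' mult_1 zero_le_one)
    show "cosh (pi * \<tau>) * (cmod (G_tau \<alpha> \<beta> \<gamma> \<tau> (1/2 + \<i> * of_real t)))\<^sup>2
          \<le> C * (qF1 \<alpha> \<beta> \<gamma> (t + \<tau>) * qF1 \<alpha> \<beta> \<gamma> (t - \<tau>)) powr (- 1 / 2)"
      using master[OF tau, of \<alpha> \<beta> \<gamma> t] fin3[OF C0 Q E] unfolding C_def by linarith
  qed
qed

end
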